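(* Let $n\ge2$ be an integer and $\lambda>0$, and let $\gamma(t)=(\omega(t),x(t),y(t))$ be a solution with $\omega>0$ of the system $$\frac{d\omega}{dt}=x\omega,\qquad \frac{dx}{dt}=x^2-xy+n-1-\lambda\omega^2,\qquad \frac{dy}{dt}=xy-nx^2-\lambda\omega^2,$$ defined on the maximal interval $(S,\infty)$, such that $\int_{t_0}^\infty\omega(\sigma)\,d\sigma=\infty$ for every $t_0\in(S,\infty)$ and $-1<x(t)<1$ for all $t\in(S,\infty)$. Then $\lim_{t\to\infty}y(t)=-\infty$. *)

theory Defs
  imports "HOL-Analysis.Analysis"
begin

definition ray :: "ereal \<Rightarrow> real set" where
  "ray S = {t. S < ereal t}"

definition is_solution ::
  "nat \<Rightarrow> real \<Rightarrow> (real \<Rightarrow> real) \<Rightarrow> (real \<Rightarrow> real) \<Rightarrow> (real \<Rightarrow> real) \<Rightarrow> real set \<Rightarrow> bool" where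
  "is_solution n lam w x y D \<longleftrightarrow>
     (\<forall>t\<in>D.
        (w has_real_derivative (x t * w t)) (at t) \<and>
        (x has_real_derivative (x t ^ 2 - x t * y t + real n - 1 - lam * w t ^ 2)) (at t) \<and>
        (y has_real_derivative (x t * y t - real n * x t ^ 2 - lam * w t ^ 2)) (at t))"

definition maximal_solution ::
  "nat \<Rightarrow> real \<Rightarrow> (real \<Rightarrow> real) \<Rightarrow> (real \<Rightarrow> real) \<Rightarrow> (real \<Rightarrow> real) \<Rightarrow> ereal \<Rightarrow> bool" where
  "maximal_solution n lam w x y S \<longleftrightarrow>
     is_solution n lam w x y (ray S) \<and>
     (\<forall>T w' x' y'. T < S \<longrightarrow> is_solution n lam w' x' y' (ray T) \<longrightarrow>
        \<not> (\<forall>t\<in>ray S. w' t = w t \<and> x' t = x t \<and> y' t = y t))"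

end

theory Submission
  imports Defs
begin


lemma nn_fin:
  fixes w g G :: "real \<Rightarrow> real"
  assumes cont: "continuous_on {a..} w"
    and nn: "\<And>s. s \<ge> a \<Longrightarrow> 0 \<le> w s" and le: "\<And>s. s \<ge> a \<Longrightarrow> w s \<le> g s"
    and der: "\<And>s. s \<ge> a \<Longrightarrow> (G has_real_derivative g s) (at s)"
    and bd: "\<And>s. s \<ge> a \<Longrightarrow> G s \<le> B"
  shows "(\<integral>\<^sup>+ s. ennreal (w s) * indicator {a..} s \<partial>lborel) \<noteq> \<infinity>"
proof -
  define f where "f = (\<lambda>(i::nat) s. ennreal (w s) * indicator {a..a + real i} s)"
  have bound: "integral\<^sup>N lborel (f i) \<le> ennreal (B - G a)" for i
  proof -
    let ?b = "a + real i"
    have ab: "a \<le> ?b" by simp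
    have gi: "(g has_integral (G ?b - G a)) {a..?b}"
      apply (rule fundamental_theorem_of_calculus[OF ab])
      using der by (auto simp: has_real_derivative_iff_has_vector_derivative[symmetric]
          intro: has_field_derivative_at_within)
    have wi: "(w has_integral integral {a..?b} w) {a..?b}"
      apply (rule integrable_integral, rule integrable_continuous_interval)
      using cont by (rule continuous_on_subset) auto
    have "integral {a..?b} w \<le> G ?b - G a"
      by (rule has_integral_le[OF wi gi]) (use le in auto)
    also have "\<dots> \<le> B - G a" using bd[of ?b] by simp
    finally have I: "integral {a..?b} w \<le> B - G a" .
    have "integral\<^sup>N lborel (f i) = ennreal (integral {a..?b} w)"
      unfolding f_def by (rule nn_integral_has_integral_lebesgue'[OF _ wi]) (use nn in auto)
    also have "\<dots> \<le> ennreal (B - G a)" using I by (rule ennreal_leI)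
    finally show ?thesis .
  qed
  have inc: "incseq f"
    unfolding incseq_def f_def le_fun_def
    by (auto intro!: mult_left_mono simp: split: split_indicator)
  have meas: "f i \<in> borel_measurable lborel" for i
  proof -
    have "(\<lambda>s. indicator {a..a + real i} s *\<^sub>R w s) \<in> borel_measurable borel"
      by (rule borel_measurable_continuous_on_indicator) (auto intro: continuous_on_subset[OF cont])
    then have "(\<lambda>s. ennreal (indicator {a..a + real i} s *\<^sub>R w s)) \<in> borel_measurable borel"
      by measurable
    moreover have "(\<lambda>s. ennreal (indicator {a..a + real i} s *\<^sub>R w s)) = f i"
      unfolding f_def by (auto simp: split: split_indicator)
    ultimately show ?thesis by simp
  qed
  have lim: "(\<lambda>i. f i s) \<longlonglongrightarrow> ennreal (w s) * indicator {a..} s" for s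
  proof (rule tendsto_eventually)
    obtain N :: nat where "s - a \<le> real N" using real_arch_simple by blast
    then show "\<forall>\<^sub>F i in sequentially. f i s = ennreal (w s) * indicator {a..} s"
      unfolding f_def eventually_sequentially
      by (intro exI[of _ N]) (auto simp: split: split_indicator)
  qed
  have "(\<lambda>i. integral\<^sup>N lborel (f i)) \<longlonglongrightarrow> (\<integral>\<^sup>+ s. ennreal (w s) * indicator {a..} s \<partial>lborel)"
    by (rule nn_integral_LIMSEQ[OF inc meas lim])
  then have "(\<integral>\<^sup>+ s. ennreal (w s) * indicator {a..} s \<partial>lborel) \<le> ennreal (B - G a)"
    using bound by (intro LIMSEQ_le_const2) auto
  then show ?thesis by (auto simp: top_unique)
qed

lemma stay_pos:
  fixes f f' :: "real \<Rightarrow> real"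
  assumes ab: "a \<le> b" and der: "\<And>s. s \<in> {a..b} \<Longrightarrow> (f has_real_derivative f' s) (at s)"
    and pos: "\<And>s. s \<in> {a..<b} \<Longrightarrow> f s \<ge> 0 \<Longrightarrow> f' s > 0" and fa: "f a \<ge> 0"
  shows "f b \<ge> 0"
proof (rule ccontr)
  assume nb: "\<not> f b \<ge> 0"
  define Z where "Z = {r \<in> {a..b}. (\<lambda>_. 0) r \<le> f r}"
  have cf: "continuous_on {a..b} f"
    using der by (intro continuous_at_imp_continuous_on) (meson DERIV_isCont atLeastAtMost_iff)
  have cl: "closed Z" unfolding Z_def
    by (rule continuous_on_closed_Collect_le[OF continuous_on_const cf]) auto
  have ne: "Z \<noteq> {}" using fa ab by (auto simp: Z_def)
  have bdd: "bdd_above Z" by (auto simp: Z_def bdd_above_def)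
  define r where "r = Sup Z"
  have rZ: "r \<in> Z" unfolding r_def by (rule closed_contains_Sup[OF ne bdd cl])
  then have r1: "a \<le> r" "r \<le> b" "f r \<ge> 0" by (auto simp: Z_def)
  with nb have rb: "r < b" by (cases "r = b") auto
  have "f' r > 0" using pos r1 rb by auto
  then obtain d where d: "d > 0" "\<And>h. h > 0 \<Longrightarrow> h < d \<Longrightarrow> f r < f (r + h)"
    using DERIV_pos_inc_right[OF der] r1 by (metis atLeastAtMost_iff)
  define h where "h = min (d/2) ((b - r)/2)"
  have h: "h > 0" "h < d" "r + h \<le> b" using d(1) rb unfolding h_def by (auto simp: min_def field_simps)
  then have "f (r + h) > f r" using d by auto
  then have "r + h \<in> Z" using h r1 by (auto simp: Z_def)
  then have "r + h \<le> r" unfolding r_def by (rule cSup_upper[OF _ bdd])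
  then show False using h by simp
qed



theorem lemma3p8:
  fixes n :: nat and lam :: real and S :: ereal
    and w x y :: "real \<Rightarrow> real"
  assumes "n \<ge> 2" and "lam > 0"
    and "maximal_solution n lam w x y S"
    and "\<forall>t\<in>ray S. w t > 0"
    and "\<forall>t0\<in>ray S. (\<integral>\<^sup>+ s. ennreal (w s) * indicator {t0..} s \<partial>lborel) = \<infinity>"
    and "\<forall>t\<in>ray S. -1 < x t \<and> x t < 1"
  shows "filterlim y at_bot at_top"
proof -
  define N where "N = real n"
  have N2: "N \<ge> 2" using assms(1) by (simp add: N_def)
  have lam: "lam > 0" by fact
  have sol: "is_solution n lam w x y (ray S)" using assms(3) by (simp add: maximal_solution_def)
  have SI: "S \<noteq> \<infinity>"
  proof
    assume SI: "S = \<infinity>"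
    define c where "c = sqrt ((real n - 1) / lam)"
    have c2: "lam * c ^ 2 = real n - 1" using lam assms(1) by (simp add: c_def)
    have "is_solution n lam (\<lambda>_. c) (\<lambda>_. 0) (\<lambda>t. - (real n - 1) * t) (ray (-\<infinity>))"
      unfolding is_solution_def using c2
      by (auto intro!: derivative_eq_intros)
    moreover have "(-\<infinity>::ereal) < S" using SI by simp
    ultimately have "\<not> (\<forall>t\<in>ray S. c = w t \<and> 0 = x t \<and> - (real n - 1) * t = y t)"
      using assms(3) unfolding maximal_solution_def by blast
    moreover have "ray S = {}" using SI by (simp add: ray_def)
    ultimately show False by simp
  qed
  obtain a :: real where aS: "S < ereal a"
  proof (cases S)
    case (real r) then show ?thesis using that[of "r + 1"] by simp
  next
    case PInf then show ?thesis using SI by simp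
  next
    case MInf then show ?thesis using that[of 0] by simp
  qed
  have inray: "t \<in> ray S" if "a \<le> t" for t
    using aS that unfolding ray_def by (auto intro: order.strict_trans2)
  have dw: "(w has_real_derivative (x t * w t)) (at t)" if "a \<le> t" for t
    using sol inray[OF that] unfolding is_solution_def by blast
  have dx: "(x has_real_derivative (x t ^ 2 - x t * y t + N - 1 - lam * w t ^ 2)) (at t)" if "a \<le> t" for t
    using sol inray[OF that] unfolding is_solution_def N_def by blast
  have dy: "(y has_real_derivative (x t * y t - N * x t ^ 2 - lam * w t ^ 2)) (at t)" if "a \<le> t" for t
    using sol inray[OF that] unfolding is_solution_def N_def by blast
  have wpos: "w t > 0" if "a \<le> t" for t using assms(4) inray[OF that] by blast
  have xb: "-1 < x t" "x t < 1" if "a \<le> t" for t using assms(6) inray[OF that] by blast+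
  have infint: "(\<integral>\<^sup>+ s. ennreal (w s) * indicator {t0..} s \<partial>lborel) = \<infinity>" if "a \<le> t0" for t0
    using assms(5) inray[OF that] by blast
  have wcont: "continuous_on {t0..} w" if "a \<le> t0" for t0
    using dw that by (intro continuous_at_imp_continuous_on) (meson DERIV_isCont atLeast_iff order_trans)
  define u where "u = (\<lambda>t. y t / w t)"
  define u' where "u' = (\<lambda>t. - (N * x t ^ 2 + lam * w t ^ 2) / w t)"
  have du: "(u has_real_derivative u' t) (at t)" if "a \<le> t" for t
  proof -
    have "(u has_real_derivative
        ((x t * y t - N * x t ^ 2 - lam * w t ^ 2) * w t - y t * (x t * w t)) / (w t * w t)) (at t)"
      unfolding u_def by (rule DERIV_divide[OF dy[OF that] dw[OF that]]) (use wpos[OF that] in simp)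
    moreover have "((x t * y t - N * x t ^ 2 - lam * w t ^ 2) * w t - y t * (x t * w t)) / (w t * w t) = u' t"
      using wpos[OF that] unfolding u'_def by (simp add: field_simps power2_eq_square)
    ultimately show ?thesis by simp
  qed
  have u'le: "u' t \<le> - lam * w t" if "a \<le> t" for t
  proof -
    have "N * x t ^ 2 / w t \<ge> 0" using wpos[OF that] N2 by simp
    then show ?thesis using wpos[OF that] unfolding u'_def by (simp add: field_simps power2_eq_square)
  qed
  have udec: "u t2 \<le> u t1" if "a \<le> t1" "t1 \<le> t2" for t1 t2
  proof (rule DERIV_nonpos_imp_nonincreasing[OF that(2)])
    fix s assume "t1 \<le> s" "s \<le> t2"
    then have "a \<le> s" using that by simp
    then show "\<exists>y. (u has_real_derivative y) (at s) \<and> y \<le> 0"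
      using du u'le wpos lam by (metis mult_pos_pos neg_le_0_iff_le less_imp_le mult_minus_left order_trans)
  qed
  have uunb: "\<exists>t\<ge>a. u t < -K" for K
  proof (rule ccontr)
    assume "\<not> (\<exists>t\<ge>a. u t < -K)"
    then have ub: "u t \<ge> -K" if "a \<le> t" for t using that by force
    have "(\<integral>\<^sup>+ s. ennreal (w s) * indicator {a..} s \<partial>lborel) \<noteq> \<infinity>"
    proof (rule nn_fin[where g = "\<lambda>t. - u' t / lam" and G = "\<lambda>t. - u t / lam" and B = "K / lam"])
      show "continuous_on {a..} w" by (rule wcont) simp
      show "0 \<le> w s" if "a \<le> s" for s using wpos[OF that] by simp
      show "w s \<le> - u' s / lam" if "a \<le> s" for s using u'le[OF that] lam by (simp add: field_simps)
      show "((\<lambda>t. - u t / lam) has_real_derivative - u' s / lam) (at s)" if "a \<le> s" for s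
        using du[OF that] lam by (auto intro!: derivative_eq_intros)
      show "- u s / lam \<le> K / lam" if "a \<le> s" for s using ub[OF that] lam by (simp add: field_simps)
    qed
    then show False using infint[of a] by simp
  qed
  have uev: "\<exists>T\<ge>a. \<forall>t\<ge>T. u t \<le> -K" for K
  proof -
    obtain T where T: "T \<ge> a" "u T < -K" using uunb by blast
    show ?thesis
    proof (intro exI[of _ T] conjI allI impI)
      fix t assume "T \<le> t"
      then show "u t \<le> -K" using udec[of T t] T by simp
    qed (use T in simp)
  qed
  obtain T0 where T0: "T0 \<ge> a" "\<And>t. t \<ge> T0 \<Longrightarrow> u t \<le> -1" using uev[of 1] by blast
  have yneg: "y t < 0" if "T0 \<le> t" for t
  proof -
    have "y t = u t * w t" using wpos[of t] T0 that unfolding u_def by simp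
    moreover have "u t < 0" using T0(2)[OF that] by simp
    moreover have "w t > 0" using wpos[of t] T0 that by simp
    ultimately show ?thesis by (simp add: mult_neg_pos)
  qed
  define \<delta> where "\<delta> = sqrt ((N - 1) / (4 * lam))"
  have \<delta>pos: "\<delta> > 0" using N2 lam by (simp add: \<delta>_def)
  have \<delta>2: "lam * \<delta> ^ 2 = (N - 1) / 4" using N2 lam by (simp add: \<delta>_def)
  define \<eta> where "\<eta> = \<delta> * exp (-4)"
  have \<eta>pos: "\<eta> > 0" using \<delta>pos by (simp add: \<eta>_def)
  have \<eta>le: "\<eta> \<le> \<delta>" using \<delta>pos by (simp add: \<eta>_def)
  have smallw: "lam * w t ^ 2 \<le> (N - 1) / 4" if "a \<le> t" "w t \<le> \<delta>" for t
  proof -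
    have "w t ^ 2 \<le> \<delta> ^ 2" using wpos[OF that(1)] that(2) by (intro power_mono) auto
    then show ?thesis using \<delta>2 lam by (metis mult_left_mono less_imp_le)
  qed
  have wgrow: "w s \<le> w t * exp (s - t)" if "a \<le> t" "t \<le> s" for s t
  proof -
    have "(\<lambda>r. w r * exp (- r)) s \<le> (\<lambda>r. w r * exp (- r)) t"
    proof (rule DERIV_nonpos_imp_nonincreasing[OF that(2)])
      fix r assume r: "t \<le> r" "r \<le> s"
      then have ar: "a \<le> r" using that by simp
      have "((\<lambda>r. w r * exp (- r)) has_real_derivative (x r * w r * exp (- r) + w r * (exp (- r) * (-1)))) (at r)"
        by (rule derivative_eq_intros dw[OF ar] | simp)+
      moreover have "x r * w r * exp (- r) + w r * (exp (- r) * (-1)) = (x r - 1) * (w r * exp (- r))"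
        by (simp add: algebra_simps)
      moreover have "(x r - 1) * (w r * exp (- r)) \<le> 0"
        using xb[OF ar] wpos[OF ar] by (intro mult_nonpos_nonneg) auto
      ultimately show "\<exists>y. ((\<lambda>r. w r * exp (- r)) has_real_derivative y) (at r) \<and> y \<le> 0" by auto
    qed
    then have "w s * exp (- s) \<le> w t * exp (- t)" by simp
    then have "w s * exp (- s) * exp s \<le> w t * exp (- t) * exp s" by simp
    then show ?thesis by (simp add: exp_diff exp_minus field_simps)
  qed
  have trap: "x t < 0" if t: "T0 \<le> t" "w t < \<eta>" for t
  proof (rule ccontr)
    assume "\<not> x t < 0"
    then have x0: "x t \<ge> 0" by simp
    have at: "a \<le> t" using t T0 by simp
    have "(\<lambda>s. x s - (s - t) / 4) (t + 4) \<ge> 0"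
    proof (rule stay_pos[where f = "\<lambda>s. x s - (s - t) / 4" and a = t and b = "t + 4" and f' = "\<lambda>s. (x s ^ 2 - x s * y s + N - 1 - lam * w s ^ 2) - 1/4"])
      show "t \<le> t + 4" by simp
      show "((\<lambda>s. x s - (s - t) / 4) has_real_derivative (x s ^ 2 - x s * y s + N - 1 - lam * w s ^ 2) - 1/4) (at s)"
        if "s \<in> {t..t+4}" for s
        using that at by (auto intro!: derivative_eq_intros dx)
      show "(\<lambda>s. x s - (s - t) / 4) t \<ge> 0" using x0 by simp
      show "0 < x s ^ 2 - x s * y s + N - 1 - lam * w s ^ 2 - 1 / 4"
        if s: "s \<in> {t..<t+4}" "(\<lambda>s. x s - (s - t) / 4) s \<ge> 0" for s
      proof -
        have as: "a \<le> s" "T0 \<le> s" using s(1) at t(1) by auto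
        have xs: "x s \<ge> 0" using s by simp
        have "w s \<le> w t * exp (s - t)" using wgrow at s by simp
        also have "\<dots> \<le> \<eta> * exp 4" using t(2) s wpos[OF at]
          by (intro mult_mono) auto
        also have "\<dots> = \<delta>" by (simp add: \<eta>_def exp_minus)
        finally have "lam * w s ^ 2 \<le> (N - 1) / 4" using smallw as by simp
        moreover have "x s * y s \<le> 0" using xs yneg[OF as(2)] by (simp add: mult_nonneg_nonpos)
        moreover have "x s ^ 2 \<ge> 0" by simp
        ultimately show ?thesis using N2 by argo
      qed
    qed
    then have "x (t + 4) \<ge> 1" by simp
    then show False using xb[of "t + 4"] at by simp
  qed
  have wbig: "w t \<ge> \<eta>" if t1: "T0 \<le> t" for t
  proof (rule ccontr)
    define t1 where "t1 = t"
    assume "\<not> \<eta> \<le> w t"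
    then have w1: "w t1 < \<eta>" by (simp add: t1_def)
    have T1: "T0 \<le> t1" "a \<le> t1" using t1 T0 by (auto simp: t1_def)
    define c where "c = (w t1 + \<eta>) / 2"
    have c: "w t1 < c" "c < \<eta>" using w1 by (auto simp: c_def)
    have wsmall: "w s < \<eta>" if "t1 \<le> s" for s
    proof -
      have "(\<lambda>s. c - w s) s \<ge> 0"
      proof (rule stay_pos[where f = "\<lambda>s. c - w s" and f' = "\<lambda>s. - (x s * w s)", OF that])
        show "((\<lambda>s. c - w s) has_real_derivative - (x r * w r)) (at r)" if "r \<in> {t1..s}" for r
          using that T1 by (auto intro!: derivative_eq_intros dw)
        show "(\<lambda>s. c - w s) t1 \<ge> 0" using c by simp
        show "0 < - (x r * w r)" if r: "r \<in> {t1..<s}" "(\<lambda>s. c - w s) r \<ge> 0" for r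
        proof -
          have "x r < 0" using trap[of r] r T1 c by auto
          then show ?thesis using wpos[of r] r T1 by (simp add: mult_neg_pos)
        qed
      qed
      then show ?thesis using c by simp
    qed
    have xneg: "x s < 0" if "t1 \<le> s" for s using trap[of s] wsmall[OF that] that T1 by simp
    define \<Psi> where "\<Psi> = (\<lambda>s. - y s - x s + (N - 1) * ln (w s))"
    have psidec: "\<Psi> s + (s - t1) / 2 \<le> \<Psi> t1" if "t1 \<le> s" for s
    proof -
      have "(\<lambda>s. \<Psi> s + (s - t1) / 2) s \<le> (\<lambda>s. \<Psi> s + (s - t1) / 2) t1"
      proof (rule DERIV_nonpos_imp_nonincreasing[OF that])
        fix r assume r: "t1 \<le> r" "r \<le> s"
        then have ar: "a \<le> r" using T1 by simp
        define d where "d = - (x r * y r - N * x r ^ 2 - lam * w r ^ 2)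
            - (x r ^ 2 - x r * y r + N - 1 - lam * w r ^ 2) + (N - 1) * (x r * w r / w r) + 1 / 2"
        have "((\<lambda>s. \<Psi> s + (s - t1) / 2) has_real_derivative d) (at r)"
          unfolding \<Psi>_def d_def using wpos[OF ar]
          by (auto intro!: derivative_eq_intros dw[OF ar] dx[OF ar] dy[OF ar])
        moreover have "d \<le> 0"
        proof -
          have d: "d = (N - 1) * (x r ^ 2 + x r - 1) + 2 * (lam * w r ^ 2) + 1/2"
            using wpos[OF ar] unfolding d_def by (simp add: field_simps power2_eq_square)
          have "x r * (x r + 1) \<le> 0" using xneg[OF r(1)] xb[OF ar]
            by (intro mult_nonpos_nonneg) auto
          then have "x r ^ 2 + x r - 1 \<le> -1" by (simp add: power2_eq_square algebra_simps)
          then have "(N - 1) * (x r ^ 2 + x r - 1) \<le> (N - 1) * (-1)" using N2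
            by (intro mult_left_mono) auto
          moreover have "lam * w r ^ 2 \<le> (N - 1) / 4"
            using smallw[OF ar] wsmall[OF r(1)] \<eta>le by simp
          ultimately show ?thesis using d N2 by argo
        qed
        ultimately show "\<exists>y. ((\<lambda>s. \<Psi> s + (s - t1) / 2) has_real_derivative y) (at r) \<and> y \<le> 0" by blast
      qed
      then show ?thesis by simp
    qed
    define C where "C = exp (\<Psi> t1 / (N - 1))"
    define k where "k = 1 / (2 * (N - 1))"
    have kpos: "k > 0" using N2 by (simp add: k_def)
    have wexp: "w s \<le> C * exp (- k * (s - t1))" if "t1 \<le> s" for s
    proof -
      have as: "a \<le> s" "T0 \<le> s" using that T1 by auto
      have "(N - 1) * ln (w s) \<le> \<Psi> s" unfolding \<Psi>_def using yneg[OF as(2)] xneg[OF that] by simp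
      also have "\<dots> \<le> \<Psi> t1 - (s - t1) / 2" using psidec[OF that] by simp
      finally have "ln (w s) \<le> (\<Psi> t1 - (s - t1) / 2) / (N - 1)" using N2
        by (simp add: field_simps)
      also have "\<dots> = \<Psi> t1 / (N - 1) - ((s - t1) / 2) / (N - 1)" by (rule diff_divide_distrib)
      also have "((s - t1) / 2) / (N - 1) = k * (s - t1)" by (simp add: k_def)
      also have "\<Psi> t1 / (N - 1) - k * (s - t1) = \<Psi> t1 / (N - 1) + (- k * (s - t1))" by simp
      finally have "w s \<le> exp (\<Psi> t1 / (N - 1) + (- k * (s - t1)))"
        using wpos[OF as(1)] by (metis exp_le_cancel_iff exp_ln)
      then show ?thesis by (simp add: C_def exp_diff exp_minus divide_inverse)
    qed
    have "(\<integral>\<^sup>+ s. ennreal (w s) * indicator {t1..} s \<partial>lborel) \<noteq> \<infinity>"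
    proof (rule nn_fin[where g = "\<lambda>s. C * exp (- k * (s - t1))" and G = "\<lambda>s. - (C / k) * exp (- k * (s - t1))" and B = 0])
      show "continuous_on {t1..} w" by (rule wcont) (use T1 in simp)
      show "0 \<le> w s" if "t1 \<le> s" for s using wpos[of s] that T1 by simp
      show "w s \<le> C * exp (- k * (s - t1))" if "t1 \<le> s" for s using wexp[OF that] .
      show "((\<lambda>s. - (C / k) * exp (- k * (s - t1))) has_real_derivative C * exp (- k * (s - t1))) (at s)" for s
        using kpos by (auto intro!: derivative_eq_intros simp: field_simps)
      show "- (C / k) * exp (- k * (s - t1)) \<le> 0" for s using kpos by (simp add: C_def)
    qed
    then show False using infint[of t1] T1 by simp
  qed
  show ?thesis
    unfolding filterlim_at_bot
  proof
    fix Z :: real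
    define K where "K = max 1 (- Z / \<eta>)"
    obtain T where T: "T \<ge> a" "\<And>t. t \<ge> T \<Longrightarrow> u t \<le> -K" using uev[of K] by blast
    show "\<forall>\<^sub>F t in at_top. y t \<le> Z"
      unfolding eventually_at_top_linorder
    proof (intro exI[of _ "max T T0"] allI impI)
      fix t assume t: "max T T0 \<le> t"
      have at: "a \<le> t" using t T by simp
      have yu: "y t = u t * w t" using wpos[OF at] unfolding u_def by simp
      have "u t * w t \<le> -K * w t" using T(2)[of t] t wpos[OF at] by (intro mult_right_mono) auto
      also have "\<dots> \<le> -K * \<eta>" using wbig[of t] t by (intro mult_left_mono_neg) (auto simp: K_def)
      also have "\<dots> \<le> Z"
      proof -
        have "(- Z / \<eta>) * \<eta> \<le> K * \<eta>" unfolding K_def using \<eta>pos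
          by (intro mult_right_mono) auto
        then show ?thesis using \<eta>pos by simp
      qed
      finally show "y t \<le> Z" using yu by simp
    qed
  qed
qed

end
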